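(* Let $d\ge 3$ and let $U$ be the $d\times d$ cyclic shift (circulant) matrix, i.e. $U_{i,j}=1$ if $j\equiv i+1 \pmod d$ and $U_{i,j}=0$ otherwise, with indices $i,j\in\{1,\dots,d\}$. For $k>0$ let $$S(k)=\big((k-1)I+(k+1)U\big)\big((k+1)I+(k-1)U\big)^{-1}.$$ Then: (a) If $d$ is even, $\lim_{k\to\infty}S_{i,j}(k)=\delta_{i,j}-\frac{2}{d}(-1)^{i+j}$ for all $i,j$. (b) If $d$ is odd, $\lim_{k\to\infty}S(k)=I$. In both cases the limiting matrix is symmetric.
   Context: $S(k)$ is the vertex scattering matrix of the "preferred orientation" vertex condition $(U-I)\Psi(v)+i(U+I)\Psi'(v)=0$ at a vertex of degree $d$. The edges at the vertex are labelled $1,\dots,d$. *)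

theory Defs
  imports "HOL-Analysis.Analysis" "Jordan_Normal_Form.Gauss_Jordan_Elimination"
begin

text \<open>Indices are 0-based: i, j range over 0..d-1 (paper: 1..d). The cyclic shift
  has entry 1 iff j = (i+1) mod d; the parity of i+j is unchanged by the shift of
  indices, so the formula for the limit is the same.\<close>

definition shift_mat :: "nat \<Rightarrow> real mat" where
  "shift_mat d = mat d d (\<lambda>(i,j). if j = (i + 1) mod d then 1 else 0)"

definition scat_mat :: "nat \<Rightarrow> real \<Rightarrow> real mat" where
  "scat_mat d k =
     ((k - 1) \<cdot>\<^sub>m 1\<^sub>m d + (k + 1) \<cdot>\<^sub>m shift_mat d) *
     the (mat_inverse ((k + 1) \<cdot>\<^sub>m 1\<^sub>m d + (k - 1) \<cdot>\<^sub>m shift_mat d))"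

end

theory Submission imports Defs "HOL-Real_Asymp.Real_Asymp" "Jordan_Normal_Form.Determinant" begin

lemma shift_mult_entry:
  assumes M: "M \<in> carrier_mat d d" and i: "i < d" and j: "j < d"
  shows "((x \<cdot>\<^sub>m 1\<^sub>m d + y \<cdot>\<^sub>m shift_mat d) * M) $$ (i,j) = x * M $$ (i,j) + y * M $$ (Suc i mod d, j)"
proof -
  have si: "Suc i mod d < d" using i by simp
  have "((x \<cdot>\<^sub>m 1\<^sub>m d + y \<cdot>\<^sub>m shift_mat d) * M) $$ (i,j)
     = (\<Sum>l<d. ((if i = l then x else 0) + (if l = Suc i mod d then y else 0)) * M $$ (l,j))"
    using M i j by (auto simp: index_mult_mat scalar_prod_def shift_mat_def lessThan_atLeast0 intro!: sum.cong)
  also have "\<dots> = (\<Sum>l<d. (if i = l then x * M $$ (l,j) else 0) + (if l = Suc i mod d then y * M $$ (l,j) else 0))"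
    by (intro sum.cong) (auto simp: distrib_right)
  also have "\<dots> = (\<Sum>l<d. (if i = l then x * M $$ (l,j) else 0)) + (\<Sum>l<d. (if l = Suc i mod d then y * M $$ (l,j) else 0))"
    by (rule sum.distrib)
  also have "\<dots> = x * M $$ (i,j) + y * M $$ (Suc i mod d, j)"
    using i si by (simp add: sum.delta sum.delta')
  finally show ?thesis .
qed

lemma idx:
  assumes "i < (d::nat)" "j < d"
  shows "(j + d - Suc i mod d) mod d = (if (j + d - i) mod d = 0 then d - 1 else (j + d - i) mod d - 1)"
proof (cases "Suc i < d")
  case T: True
  have s: "Suc i mod d = Suc i" using T by (rule mod_less)
  show ?thesis
  proof (cases "Suc i \<le> j")
    case T2: True
    have e1: "j + d - Suc i = (j - Suc i) + d" using T2 by arith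
    have a: "(j + d - Suc i) mod d = j - Suc i" unfolding e1 mod_add_self2
      by (rule mod_less) (use assms T2 in arith)
    have e2: "j + d - i = (j - i) + d" using T2 by arith
    have b: "(j + d - i) mod d = j - i" unfolding e2 mod_add_self2
      by (rule mod_less) (use assms T2 in arith)
    have nz: "\<not> (j - i = 0)" using T2 by arith
    show ?thesis unfolding s a b if_not_P[OF nz] using T2 by arith
  next
    case F2: False
    show ?thesis
    proof (cases "j = i")
      case T3: True
      have e: "j + d - Suc i = d - 1" using T3 assms by arith
      have a: "(j + d - Suc i) mod d = d - 1" unfolding e
        by (rule mod_less) (use assms in arith)
      have e': "j + d - i = d" using T3 by arith
      have b: "(j + d - i) mod d = 0" unfolding e' by (rule mod_self)
      show ?thesis unfolding s a b by simp
    next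
      case F3: False
      have a: "(j + d - Suc i) mod d = j + d - Suc i"
        by (rule mod_less) (use assms F2 F3 in arith)
      have b: "(j + d - i) mod d = j + d - i"
        by (rule mod_less) (use assms F2 F3 in arith)
      have nz: "\<not> (j + d - i = 0)" using F2 F3 assms by arith
      show ?thesis unfolding s a b if_not_P[OF nz] by arith
    qed
  qed
next
  case F: False
  have di: "Suc i = d" using F assms by arith
  have s: "Suc i mod d = 0" unfolding di by (rule mod_self)
  have a: "(j + d - Suc i mod d) mod d = j" unfolding s diff_zero mod_add_self2
    by (rule mod_less) (use assms in arith)
  have e: "j + d - i = Suc j" using di by arith
  show ?thesis
  proof (cases "Suc j < d")
    case T4: True
    have b: "Suc j mod d = Suc j" by (rule mod_less) (rule T4)
    show ?thesis unfolding a e b by simp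
  next
    case F4: False
    then have sj: "Suc j = d" using assms by arith
    have b: "Suc j mod d = 0" unfolding sj by (rule mod_self)
    show ?thesis unfolding a e b using sj by simp
  qed
qed

lemma mod0:
  assumes "i < (d::nat)" "j < d"
  shows "((j + d - i) mod d = 0) \<longleftrightarrow> i = j"
proof (cases "i \<le> j")
  case True
  have e: "j + d - i = (j - i) + d" using True by arith
  have "(j + d - i) mod d = j - i" unfolding e mod_add_self2
    by (rule mod_less) (use assms in arith)
  then show ?thesis using True by arith
next
  case False
  have "(j + d - i) mod d = j + d - i"
    by (rule mod_less) (use assms False in arith)
  then show ?thesis using False assms by arith
qed

lemma parity:
  assumes "even (d::nat)" "i < d"
  shows "(-1::real)^((j+d-i) mod d) = (-1)^(i+j)"
proof -
  have "even ((j+d-i) mod d) = even (j+d-i)" using dvd_mod_iff[of 2 d "j+d-i"] assms by simp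
  also have "\<dots> = even (i+j)" using assms by (auto simp: even_diff_nat even_add)
  finally show ?thesis by (simp add: minus_one_power_iff)
qed

lemma coef1:
  fixes t a den :: real
  assumes "a \<noteq> 0" "den = 1 - (-t)^d" "den \<noteq> 0" "d > 0" "m < d"
  shows "a * ((-t)^m/(a*den)) + (a*t) * ((-t)^(if m = 0 then d - 1 else m - 1)/(a*den)) = (if m = 0 then 1 else 0)"
proof (cases "m = 0")
  case True
  obtain e where e: "d = Suc e" using assms by (cases d) auto
  have "a * ((-t)^m/(a*den)) + (a*t) * ((-t)^(if m = 0 then d - 1 else m - 1)/(a*den))
      = (1 + t * (-t)^e) / den" using True e assms(1,3) by (simp add: field_simps)
  also have "1 + t * (-t)^e = den" using assms(2) e by simp
  finally show ?thesis using True assms(3) by simp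
next
  case False
  then obtain n where n: "m = Suc n" by (cases m) auto
  show ?thesis using n assms(1,3) by (simp add: field_simps)
qed

lemma coef2:
  fixes t a den :: real
  assumes "a \<noteq> 0" "den \<noteq> 0" "d > 0"
  shows "(a*t) * ((-t)^m/(a*den)) + a * ((-t)^(if m = 0 then d - 1 else m - 1)/(a*den))
     = (if m = 0 then t + (-t)^(d-1) else (-t)^(m-1) * (1 - t^2)) / den"
proof (cases "m = 0")
  case True
  then show ?thesis using assms by (simp add: field_simps)
next
  case False
  then obtain n where n: "m = Suc n" by (cases m) auto
  show ?thesis using n assms by (simp add: field_simps power2_eq_square)
qed

lemma sum_one_pow: "(\<Sum>i<n. (1::real)^i) = real n"
  by (induction n) simp_all

theorem mainTheorem2:
  fixes d :: nat
  assumes "d \<ge> 3"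
  shows "\<exists>L \<in> carrier_mat d d.
           (\<forall>i<d. \<forall>j<d. ((\<lambda>k. scat_mat d k $$ (i, j)) \<longlongrightarrow> L $$ (i, j)) at_top)
         \<and> (even d \<longrightarrow> L = mat d d (\<lambda>(i, j). (if i = j then 1 else 0) - 2 / real d * (-1) ^ (i + j)))
         \<and> (odd d \<longrightarrow> L = 1\<^sub>m d)
         \<and> transpose_mat L = L"
proof -
  have d0: "d > 0" using assms by simp
  define tt where "tt k = (k - 1) / (k + 1)" for k :: real
  define E where "E t m = (if m = 0 then t + (-t)^(d-1) else (-t)^(m-1) * (1 - t^2)) / (1 - (-t)^d)"
    for t :: real and m :: nat
  have ttb: "-1 < tt k \<and> tt k < 1" if "k > 0" for k
    using that by (simp add: tt_def field_simps)
  have entry: "scat_mat d k $$ (i,j) = E (tt k) ((j + d - i) mod d)" if k: "k > 0" and ij: "i < d" "j < d" for k i j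
  proof -
    define a where "a = k + 1"
    define t where "t = tt k"
    define den where "den = 1 - (-t)^d"
    have a0: "a \<noteq> 0" using k by (simp add: a_def)
    have ak: "k + 1 = a" by (simp add: a_def)
    have k1: "k - 1 = a * t" using k by (simp add: a_def t_def tt_def)
    have tb: "\<bar>t\<bar> < 1" using ttb[OF k] by (auto simp: t_def)
    have "\<bar>t\<bar> ^ d < 1" using tb d0 by (simp add: power_less_one_iff)
    then have "\<bar>(-t)^d\<bar> < 1" by (simp add: power_abs)
    then have "(-t)^d < 1" using abs_ge_self[of "(-t)^d"] by linarith
    then have den0: "den \<noteq> 0" unfolding den_def by linarith
    define g where "g m = (-t)^m / (a * den)" for m :: nat
    define B where "B = mat d d (\<lambda>(i,j). g ((j + d - i) mod d))"
    have Bc: "B \<in> carrier_mat d d" by (simp add: B_def)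
    have Bent: "B $$ (i', j') = g ((j' + d - i') mod d)" if "i' < d" "j' < d" for i' j'
      unfolding B_def by (simp only: index_mat(1)[OF that] case_prod_conv)
    have Bsh: "B $$ (Suc i' mod d, j') = g (if (j' + d - i') mod d = 0 then d - 1 else (j' + d - i') mod d - 1)"
      if "i' < d" "j' < d" for i' j'
    proof -
      have "Suc i' mod d < d" using d0 by simp
      from Bent[OF this that(2)] show ?thesis unfolding idx[OF that] .
    qed
    define A where "A = (k + 1) \<cdot>\<^sub>m 1\<^sub>m d + (k - 1) \<cdot>\<^sub>m shift_mat d"
    have Ac: "A \<in> carrier_mat d d" by (simp add: A_def shift_mat_def)
    have AB: "A * B = 1\<^sub>m d"
    proof (rule eq_matI)
      fix i j assume i: "i < dim_row (1\<^sub>m d)" and j: "j < dim_col (1\<^sub>m d)"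
      then have i: "i < d" and j: "j < d" by auto
      define m where "m = (j + d - i) mod d"
      have md: "m < d" using d0 by (simp add: m_def)
      have "(A * B) $$ (i,j) = (k + 1) * B $$ (i,j) + (k - 1) * B $$ (Suc i mod d, j)"
        unfolding A_def by (rule shift_mult_entry[OF Bc i j])
      also have "\<dots> = a * g m + (a*t) * g (if m = 0 then d - 1 else m - 1)"
        unfolding ak k1 Bent[OF i j] Bsh[OF i j] m_def ..
      also have "\<dots> = (if m = 0 then 1 else 0)"
        unfolding g_def by (rule coef1[OF a0 den_def den0 d0 md])
      also have "\<dots> = 1\<^sub>m d $$ (i,j)"
        unfolding index_one_mat(1)[OF i j] m_def mod0[OF i j] ..
      finally show "(A * B) $$ (i,j) = 1\<^sub>m d $$ (i,j)" .
    qed (use Ac Bc in auto)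
    have inv: "mat_inverse A = Some B"
    proof -
      have "Determinant.det (A * B) = Determinant.det A * Determinant.det B" by (rule det_mult[OF Ac Bc])
      then have "Determinant.det A * Determinant.det B = 1" using AB by simp
      then have "Determinant.det A \<noteq> 0" by auto
      from det_non_zero_imp_unit[OF Ac this] have U: "A \<in> Units (ring_mat TYPE(real) d undefined)" .
      have "mat_inverse A \<noteq> None"
      proof
        assume "mat_inverse A = None"
        from mat_inverse(1)[OF Ac this, where b = undefined] U show False by blast
      qed
      then obtain B' where B': "mat_inverse A = Some B'" by auto
      from mat_inverse(2)[OF Ac B'] have B'c: "B' \<in> carrier_mat d d" and B'A: "B' * A = 1\<^sub>m d" by auto
      have "B' = B' * (A * B)" using B'c by (simp add: AB)
      also have "\<dots> = (B' * A) * B" using B'c Ac Bc by (simp add: assoc_mult_mat)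
      also have "\<dots> = B" using Bc by (simp add: B'A)
      finally show ?thesis using B' by simp
    qed
    have S: "scat_mat d k = ((k - 1) \<cdot>\<^sub>m 1\<^sub>m d + (k + 1) \<cdot>\<^sub>m shift_mat d) * B"
      unfolding scat_mat_def inv[unfolded A_def] by simp
    define m where "m = (j + d - i) mod d"
    have "scat_mat d k $$ (i,j) = (k - 1) * B $$ (i,j) + (k + 1) * B $$ (Suc i mod d, j)"
      unfolding S by (rule shift_mult_entry[OF Bc ij])
    also have "\<dots> = (a*t) * g m + a * g (if m = 0 then d - 1 else m - 1)"
      unfolding ak k1 Bent[OF ij] Bsh[OF ij] m_def ..
    also have "\<dots> = E t m"
      unfolding g_def E_def den_def[symmetric] by (rule coef2[OF a0 den0 d0])
    finally show ?thesis by (simp only: t_def m_def)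
  qed
  define Lv where "Lv m = (if even d then (if m = 0 then 1 - 2 / real d else - 2 / real d * (-1)^m)
      else (if m = 0 then 1 else 0))" for m :: nat
  have tlim: "(tt \<longlongrightarrow> 1) at_top" unfolding tt_def by real_asymp
  have evk: "\<forall>\<^sub>F k in at_top. (k::real) > 0" by (rule eventually_gt_at_top)
  have lim: "((\<lambda>k. E (tt k) m) \<longlongrightarrow> Lv m) at_top" if md: "m < d" for m
  proof (cases "even d")
    case False
    have m1: "(-1::real)^d = -1" using False by simp
    have m2: "(-1::real)^(d-1) = 1" using False d0 by (simp add: even_diff_nat)
    show ?thesis
    proof (cases "m = 0")
      case True
      have "((\<lambda>k. (tt k + (- tt k)^(d-1)) / (1 - (- tt k)^d)) \<longlongrightarrow> (1 + (-1)^(d-1)) / (1 - (-1)^d)) at_top"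
        by (intro tendsto_intros tlim) (simp add: m1)
      then show ?thesis using True m1 m2 False by (simp add: E_def Lv_def)
    next
      case mF: False
      have "((\<lambda>k. (- tt k)^(m-1) * (1 - (tt k)^2) / (1 - (- tt k)^d)) \<longlongrightarrow> (-1)^(m-1) * (1 - 1^2) / (1 - (-1)^d)) at_top"
        by (intro tendsto_intros tlim) (simp add: m1)
      then show ?thesis using mF m1 False by (simp add: E_def Lv_def)
    qed
  next
    case True
    define X where "X t = (if m = 0 then t * (\<Sum>i<d-2. t^i) else (-t)^(m-1) * (1 + t))" for t :: real
    define F where "F t = X t / (\<Sum>i<d. t^i)" for t :: real
    have dd: "d - 1 = Suc (d - 2)" using assms by arith
    have EF: "E t m = F t" if t1: "t < 1" for t
    proof -
      have mt: "(-t)^d = t^d" using True by simp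
      have ne: "1 - t \<noteq> 0" using t1 by simp
      have sd: "1 - t^d = (1 - t) * (\<Sum>i<d. t^i)" by (rule one_diff_power_eq)
      have o: "odd (d - 1)" using True d0 by (simp add: even_diff_nat)
      have "(-t)^(d-1) = - (t^(d-1))" using o by simp
      also have "t^(d-1) = t * t^(d-2)" unfolding dd by simp
      finally have "t + (-t)^(d-1) = t * (1 - t^(d-2))" by (simp add: algebra_simps)
      also have "1 - t^(d-2) = (1 - t) * (\<Sum>i<d-2. t^i)" by (rule one_diff_power_eq)
      finally have n0: "t + (-t)^(d-1) = (1 - t) * (t * (\<Sum>i<d-2. t^i))" by simp
      have n1: "(-t)^(m-1) * (1 - t^2) = (1 - t) * ((-t)^(m-1) * (1 + t))"
        by (simp add: power2_eq_square algebra_simps)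
      have num: "(if m = 0 then t + (-t)^(d-1) else (-t)^(m-1) * (1 - t^2)) = (1 - t) * X t"
        unfolding X_def using n0 n1 by simp
      show ?thesis unfolding E_def F_def num mt sd using ne by simp
    qed
    have s1: "(\<Sum>i<d. (1::real)^i) \<noteq> 0" using d0 by (simp add: sum_one_pow)
    have "((\<lambda>k. F (tt k)) \<longlongrightarrow> F 1) at_top"
    proof (cases "m = 0")
      case True
      have X1: "X = (\<lambda>t. t * (\<Sum>i<d-2. t^i))" using True by (simp add: X_def fun_eq_iff)
      show ?thesis unfolding F_def X1 by (intro tendsto_intros tlim) (rule s1)
    next
      case False
      have X1: "X = (\<lambda>t. (-t)^(m-1) * (1 + t))" using False by (simp add: X_def fun_eq_iff)
      show ?thesis unfolding F_def X1 by (intro tendsto_intros tlim) (rule s1)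
    qed
    moreover have "F 1 = Lv m"
    proof (cases "m = 0")
      case True
      have "real (d - 2) = real d - 2" using assms by (simp add: of_nat_diff)
      then show ?thesis using \<open>even d\<close> True d0 by (simp add: F_def X_def Lv_def field_simps sum_one_pow)
    next
      case False
      then obtain n where n: "m = Suc n" by (cases m) auto
      show ?thesis using \<open>even d\<close> d0 n by (simp add: F_def X_def Lv_def field_simps sum_one_pow)
    qed
    moreover have "\<forall>\<^sub>F k in at_top. F (tt k) = E (tt k) m"
      using evk by eventually_elim (use EF ttb in auto)
    ultimately show ?thesis by (auto intro: Lim_transform_eventually)
  qed
  define L where "L = (if even d then mat d d (\<lambda>(i, j). (if i = j then 1 else 0) - 2 / real d * (-1) ^ (i + j)) else 1\<^sub>m d)"
  have Lc: "L \<in> carrier_mat d d" by (simp add: L_def)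
  have Lent: "L $$ (i,j) = Lv ((j + d - i) mod d)" if ij: "i < d" "j < d" for i j
  proof (cases "even d")
    case True
    have "L $$ (i,j) = (if i = j then 1 else 0) - 2 / real d * (-1) ^ (i + j)"
      using True ij by (simp add: L_def)
    also have "\<dots> = Lv ((j + d - i) mod d)"
      unfolding Lv_def parity[OF True ij(1), of j, symmetric] mod0[OF ij] using True by simp
    finally show ?thesis .
  next
    case False
    have "L $$ (i,j) = (if i = j then 1 else 0)"
      using False ij by (simp add: L_def)
    also have "\<dots> = Lv ((j + d - i) mod d)"
      unfolding Lv_def mod0[OF ij] using False by simp
    finally show ?thesis .
  qed
  have conv: "\<forall>i<d. \<forall>j<d. ((\<lambda>k. scat_mat d k $$ (i, j)) \<longlongrightarrow> L $$ (i, j)) at_top"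
  proof (intro allI impI)
    fix i j assume ij: "i < d" "j < d"
    have md: "(j + d - i) mod d < d" using d0 by simp
    have "\<forall>\<^sub>F k in at_top. E (tt k) ((j + d - i) mod d) = scat_mat d k $$ (i, j)"
      using evk by eventually_elim (use entry ij in auto)
    with lim[OF md] show "((\<lambda>k. scat_mat d k $$ (i, j)) \<longlongrightarrow> L $$ (i, j)) at_top"
      unfolding Lent[OF ij] by (rule Lim_transform_eventually)
  qed
  have sym: "transpose_mat L = L"
    by (rule eq_matI) (auto simp: L_def add.commute)
  show ?thesis using Lc conv sym by (intro bexI[of _ L]) (auto simp: L_def)
qed

end
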